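(* Let $n,m$ be positive integers, $\xi_m=e^{2\pi\sqrt{-1}/m}$, and $Q$ an integer valued positive definite quadratic form on $\mathbb{Z}^n$. Set \[ \Theta_{Q,m}(q)=\sum_{(k_1,\dots,k_n)\in\mathbb{Z}^n}q^{Q(k_1,\dots,k_n)}\xi_m^{k_1}. \] Suppose that $\Theta_{Q,m}(q)$ is unchanged when $\xi_m$ is replaced by $g(\xi_m)$, for every $g\in\mathrm{Gal}(\mathbb{Q}(\xi_m)/\mathbb{Q})$. Then $\Theta_{Q,m}(q)$ is a $\mathbb{Q}$-linear combination of theta series $\Theta_{Q'}(q)=\sum_{k\in\mathbb{Z}^n}q^{Q'(k)}$ of integer valued positive definite quadratic forms $Q'$ on $\mathbb{Z}^n$.
   Context: An integer valued positive definite quadratic form on $\mathbb{Z}^n$ is a quadratic form taking integer values on $\mathbb{Z}^n$ and positive definite over $\mathbb{R}$. The series are formal power series in $q$ with coefficients in $\mathbb{Q}(\xi_m)$, and $g$ acts on coefficients. *)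

theory Defs
  imports Complex_Main "HOL-Computational_Algebra.Formal_Power_Series"
    "HOL-Computational_Algebra.Polynomial"
begin

text \<open>Integer vectors in Z^n are represented as functions nat => int vanishing outside {..<n};
  the coordinate k_1 is k 0.\<close>
definition Zn :: "nat \<Rightarrow> (nat \<Rightarrow> int) set" where
  "Zn n = {k. \<forall>i\<ge>n. k i = 0}"

definition int_pd_qform :: "nat \<Rightarrow> ((nat \<Rightarrow> int) \<Rightarrow> int) \<Rightarrow> bool" where
  "int_pd_qform n Q \<longleftrightarrow>
     (\<exists>A :: nat \<Rightarrow> nat \<Rightarrow> real.
        (\<forall>k\<in>Zn n. real_of_int (Q k) = (\<Sum>i<n. \<Sum>j<n. A i j * real_of_int (k i) * real_of_int (k j))) \<and>
        (\<forall>x :: nat \<Rightarrow> real. (\<exists>i<n. x i \<noteq> 0) \<longrightarrow> (\<Sum>i<n. \<Sum>j<n. A i j * x i * x j) > 0))"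

definition xi :: "nat \<Rightarrow> complex" where
  "xi m = exp (2 * pi * \<i> / of_nat m)"

definition cyclo_field :: "nat \<Rightarrow> complex set" where
  "cyclo_field m = {z. \<exists>p :: rat poly. z = poly (map_poly of_rat p) (xi m)}"

text \<open>Gal(Q(xi_m)/Q): field automorphisms of Q(xi_m) (they automatically fix Q).\<close>
definition cyclo_gal :: "nat \<Rightarrow> (complex \<Rightarrow> complex) set" where
  "cyclo_gal m = {g. bij_betw g (cyclo_field m) (cyclo_field m) \<and> g 1 = 1 \<and>
     (\<forall>x\<in>cyclo_field m. \<forall>y\<in>cyclo_field m. g (x + y) = g x + g y \<and> g (x * y) = g x * g y)}"

definition theta_m :: "nat \<Rightarrow> ((nat \<Rightarrow> int) \<Rightarrow> int) \<Rightarrow> nat \<Rightarrow> complex fps" where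
  "theta_m n Q m = Abs_fps (\<lambda>N. \<Sum>k\<in>{k\<in>Zn n. Q k = int N}. xi m powi (k 0))"

definition theta :: "nat \<Rightarrow> ((nat \<Rightarrow> int) \<Rightarrow> int) \<Rightarrow> complex fps" where
  "theta n Q = Abs_fps (\<lambda>N. of_nat (card {k\<in>Zn n. Q k = int N}))"

end

theory Submission
  imports Defs "Berlekamp_Zassenhaus.Factor_Bound" "Jordan_Normal_Form.Char_Poly" "HOL-Number_Theory.Number_Theory"
begin


lemma root_unity_pow_mod:
  fixes z :: complex assumes "z^m = 1" shows "z ^ k = z ^ (k mod m)"
proof -
  have "z ^ k = (z^m)^(k div m) * z^(k mod m)"
    by (metis div_mult_mod_eq power_add power_mult mult.commute)
  thus ?thesis using assms by simp
qed

lemma ring_rat_imp_int: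
  fixes z :: complex and w :: "int poly"
  assumes zm: "z^m = 1" and m: "m > 0" and rat: "poly (of_int_poly w) z \<in> \<rat>"
  shows "poly (of_int_poly w) z \<in> \<int>"
proof -
  define \<alpha> where "\<alpha> = poly (of_int_poly w) z"
  define M :: "int mat" where "M = mat m m (\<lambda>(i,j). \<Sum>t\<le>degree w. if (i+t) mod m = j then Polynomial.coeff w t else 0)"
  define v :: "complex vec" where "v = vec m (\<lambda>j. z^j)"
  have M: "M \<in> carrier_mat m m" unfolding M_def by auto
  have alpha: "\<alpha> = (\<Sum>t\<le>degree w. of_int (Polynomial.coeff w t) * z^t)"
    unfolding \<alpha>_def by (simp add: poly_altdef degree_map_poly coeff_map_poly)
  have "of_int_hom.mat_hom M *\<^sub>v v = \<alpha> \<cdot>\<^sub>v v"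
  proof (rule eq_vecI)
    fix i assume i: "i < dim_vec (\<alpha> \<cdot>\<^sub>v v)"
    hence i: "i < m" by (simp add: v_def)
    have "(of_int_hom.mat_hom M *\<^sub>v v) $ i = (\<Sum>j<m. of_int (M $$ (i,j)) * z^j)"
      using i M by (simp add: scalar_prod_def v_def lessThan_atLeast0)
    also have "\<dots> = (\<Sum>j<m. \<Sum>t\<le>degree w. if (i+t) mod m = j then of_int (Polynomial.coeff w t) * z^j else 0)"
      using i by (auto simp: M_def of_int_sum sum_distrib_right intro!: sum.cong)
    also have "\<dots> = (\<Sum>t\<le>degree w. \<Sum>j<m. if (i+t) mod m = j then of_int (Polynomial.coeff w t) * z^j else 0)"
      by (rule sum.swap)
    also have "\<dots> = (\<Sum>t\<le>degree w. of_int (Polynomial.coeff w t) * z^((i+t) mod m))"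
      using m by (intro sum.cong refl) (simp add: sum.delta)
    also have "\<dots> = (\<Sum>t\<le>degree w. z^i * (of_int (Polynomial.coeff w t) * z^t))"
      by (intro sum.cong refl) (simp add: root_unity_pow_mod[OF zm, of "i+_", symmetric] power_add)
    also have "\<dots> = z^i * \<alpha>" by (simp add: alpha sum_distrib_left)
    finally show "(of_int_hom.mat_hom M *\<^sub>v v) $ i = (\<alpha> \<cdot>\<^sub>v v) $ i"
      using i by (simp add: v_def)
  qed (simp add: v_def M_def)
  moreover have "v \<noteq> 0\<^sub>v m"
  proof
    assume "v = 0\<^sub>v m" hence "v $ 0 = 0\<^sub>v m $ 0" by simp
    thus False using m by (simp add: v_def)
  qed
  ultimately have "eigenvalue (of_int_hom.mat_hom M) \<alpha>"
    unfolding eigenvalue_def eigenvector_def using M by (auto simp: v_def intro!: exI[of _ v])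
  hence "poly (char_poly (of_int_hom.mat_hom M)) \<alpha> = 0"
    using M by (subst (asm) eigenvalue_root_char_poly[of _ m]) auto
  hence "poly (of_int_poly (char_poly M)) \<alpha> = 0"
    using of_int_hom.char_poly_hom[OF M, where 'a=complex] by simp
  moreover have "lead_coeff (char_poly M) = 1" using degree_monic_char_poly[OF M] by simp
  ultimately have "algebraic_int \<alpha>" unfolding algebraic_int_altdef_ipoly by blast
  thus ?thesis using rational_algebraic_int_is_int rat unfolding \<alpha>_def by blast
qed


interpretation rq: map_poly_comm_ring_hom "of_rat :: rat \<Rightarrow> complex" ..

lemma poly_of_int_sum: "poly (of_int_poly w) (x::complex) = (\<Sum>i\<le>degree w. of_int (Polynomial.coeff w i) * x^i)"
  by (simp add: poly_altdef degree_map_poly coeff_map_poly)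

definition inR :: "complex \<Rightarrow> complex \<Rightarrow> bool" where
  "inR z A \<longleftrightarrow> (\<exists>w::int poly. A = poly (of_int_poly w) z)"

definition qdiv :: "nat \<Rightarrow> complex \<Rightarrow> complex \<Rightarrow> bool" where
  "qdiv q z A \<longleftrightarrow> (\<exists>A'. inR z A' \<and> A = of_nat q * A')"

lemma inR_of_int: "inR z (of_int c)"
  unfolding inR_def by (rule exI[of _ "[:c:]"]) (simp add: poly_of_int_sum)

lemma inR_z: "inR z z"
  unfolding inR_def by (rule exI[of _ "[:0,1:]"]) simp

lemma inR_add: assumes "inR z A" "inR z B" shows "inR z (A + B)"
proof -
  from assms obtain a b where "A = poly (of_int_poly a) z" "B = poly (of_int_poly b) z"
    unfolding inR_def by auto
  thus ?thesis unfolding inR_def by (intro exI[of _ "a + b"]) (simp add: hom_distribs)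
qed

lemma inR_diff: assumes "inR z A" "inR z B" shows "inR z (A - B)"
proof -
  from assms obtain a b where "A = poly (of_int_poly a) z" "B = poly (of_int_poly b) z"
    unfolding inR_def by auto
  thus ?thesis unfolding inR_def by (intro exI[of _ "a - b"]) (simp add: hom_distribs)
qed

lemma inR_mult: assumes "inR z A" "inR z B" shows "inR z (A * B)"
proof -
  from assms obtain a b where "A = poly (of_int_poly a) z" "B = poly (of_int_poly b) z"
    unfolding inR_def by auto
  thus ?thesis unfolding inR_def by (intro exI[of _ "a * b"]) (simp add: hom_distribs)
qed

lemma inR_of_nat: "inR z (of_nat c)"
  using inR_of_int[of z "int c"] by simp

lemma inR_pow: "inR z A \<Longrightarrow> inR z (A ^ n)"
  by (induction n) (auto intro: inR_mult simp: inR_of_int[of z 1, simplified])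

lemma inR_sum: "(\<And>i. i \<in> S \<Longrightarrow> inR z (f i)) \<Longrightarrow> inR z (\<Sum>i\<in>S. f i)"
  by (induction S rule: infinite_finite_induct) (auto intro: inR_add simp: inR_of_int[of z 0, simplified])

lemma inR_poly: "inR z x \<Longrightarrow> inR z (poly (of_int_poly w) x)"
  unfolding poly_of_int_sum by (intro inR_sum inR_mult inR_of_int inR_pow)

lemma qdiv_add: assumes "qdiv q z A" "qdiv q z B" shows "qdiv q z (A + B)"
proof -
  from assms obtain a b where "inR z a" "inR z b" "A = of_nat q * a" "B = of_nat q * b"
    unfolding qdiv_def by auto
  thus ?thesis unfolding qdiv_def by (intro exI[of _ "a + b"]) (auto intro: inR_add simp: algebra_simps)
qed

lemma qdiv_diff: assumes "qdiv q z A" "qdiv q z B" shows "qdiv q z (A - B)"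
proof -
  from assms obtain a b where "inR z a" "inR z b" "A = of_nat q * a" "B = of_nat q * b"
    unfolding qdiv_def by auto
  thus ?thesis unfolding qdiv_def by (intro exI[of _ "a - b"]) (auto intro: inR_diff simp: algebra_simps)
qed

lemma qdiv_mult: assumes "qdiv q z A" "inR z B" shows "qdiv q z (A * B)"
proof -
  from assms obtain a where "inR z a" "A = of_nat q * a"
    unfolding qdiv_def by auto
  thus ?thesis unfolding qdiv_def using assms(2) by (intro exI[of _ "a * B"]) (auto intro: inR_mult)
qed

lemma qdiv_0: "qdiv q z 0"
  unfolding qdiv_def using inR_of_int[of z 0] by auto

lemma qdiv_sum: "(\<And>i. i \<in> S \<Longrightarrow> qdiv q z (f i)) \<Longrightarrow> qdiv q z (\<Sum>i\<in>S. f i)"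
  by (induction S rule: infinite_finite_induct) (auto intro: qdiv_add qdiv_0)

lemma qdiv_of_int: assumes "int q dvd c" shows "qdiv q z (of_int c)"
proof -
  from assms obtain k where "c = int q * k" by auto
  thus ?thesis unfolding qdiv_def by (intro exI[of _ "of_int k"]) (auto intro: inR_of_int)
qed

lemma binom_qdiv:
  assumes q: "prime q" and A: "inR z A" and B: "inR z B"
  shows "qdiv q z ((A + B)^q - A^q - B^q)"
proof -
  have q1: "q > 0" using q prime_gt_0_nat by blast
  have "(A + B)^q = (\<Sum>k\<le>q. of_nat (q choose k) * A^k * B^(q-k))" by (rule binomial_ring)
  also have "{..q} = insert 0 (insert q {0<..<q})" using q1 by auto
  also have "(\<Sum>k\<in>insert 0 (insert q {0<..<q}). of_nat (q choose k) * A^k * B^(q-k)) =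
      B^q + (A^q + (\<Sum>k\<in>{0<..<q}. of_nat (q choose k) * A^k * B^(q-k)))"
    using q1 by (subst sum.insert; simp)+
  finally have eq: "(A + B)^q - A^q - B^q = (\<Sum>k\<in>{0<..<q}. of_nat (q choose k) * A^k * B^(q-k))"
    by simp
  show ?thesis unfolding eq
  proof (rule qdiv_sum)
    fix k assume k: "k \<in> {0<..<q}"
    hence "q dvd (q choose k)" using dvd_choose_prime[of k q] q by auto
    then obtain c where c: "q choose k = q * c" by auto
    show "qdiv q z (of_nat (q choose k) * A^k * B^(q-k))"
      unfolding qdiv_def c
      by (rule exI[of _ "of_nat c * A^k * B^(q-k)"]) (auto intro!: inR_mult inR_of_nat inR_pow A B)
  qed
qed

lemma fermat_nat:
  assumes q: "prime (q::nat)"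
  shows "[r^q = r] (mod q)"
proof (cases "q dvd r")
  case True
  have q1: "q > 0" using q prime_gt_0_nat by blast
  have "q dvd r^q" using dvd_trans[OF True dvd_power[of q r]] q1 by simp
  thus ?thesis using True by (simp add: cong_def)
next
  case False
  have q1: "q > 0" using q prime_gt_0_nat by blast
  have "[r^(q-1) = 1] (mod q)" using fermat_theorem[OF q False] .
  hence "[r^(q-1) * r = 1 * r] (mod q)" by (rule cong_mult) (rule cong_refl)
  moreover have "r^(q-1)*r = r^q" using q1 by (simp add: power_Suc2[symmetric])
  ultimately show ?thesis by simp
qed

lemma fermat_int:
  assumes q: "prime (q::nat)"
  shows "int q dvd a^q - a"
proof -
  define r where "r = nat (a mod int q)"
  have q1: "q > 0" using q prime_gt_0_nat by blast
  have r: "int r = a mod int q" unfolding r_def using q1 by simp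
  have ar: "[a = int r] (mod int q)" unfolding r cong_def by simp
  have "[int (r^q) = int r] (mod int q)" using fermat_nat[OF q, of r] by (subst cong_int_iff)
  hence "[int r^q = int r] (mod int q)" by simp
  moreover have "[a^q = int r^q] (mod int q)" using ar by (rule cong_pow)
  ultimately have "[a^q = a] (mod int q)" using ar by (meson cong_sym cong_trans)
  thus ?thesis by (simp add: cong_iff_dvd_diff dvd_diff_commute)
qed

lemma frobenius_qdiv:
  assumes q: "prime q"
  shows "qdiv q z (poly (of_int_poly w) z ^ q - poly (of_int_poly w) (z^q))"
proof (induction w)
  case 0 thus ?case using q by (simp add: qdiv_0 prime_gt_0_nat zero_power)
next
  case (pCons a w)
  define W where "W = poly (of_int_poly w) z"
  define W' where "W' = poly (of_int_poly w) (z^q)"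
  have WR: "inR z W" unfolding W_def inR_def by auto
  have e1: "poly (of_int_poly (pCons a w)) z = of_int a + z * W"
    unfolding W_def by (simp add: of_int_hom.map_poly_pCons_hom)
  have e2: "poly (of_int_poly (pCons a w)) (z^q) = of_int a + z^q * W'"
    unfolding W'_def by (simp add: of_int_hom.map_poly_pCons_hom)
  have "(of_int a + z * W)^q - (of_int a + z^q * W') =
        ((of_int a + z * W)^q - (of_int a)^q - (z * W)^q) + (of_int (a^q - a)) + (W^q - W') * z^q"
    by (simp add: power_mult_distrib of_int_power) (simp add: algebra_simps)
  moreover have "qdiv q z ((of_int a + z * W)^q - (of_int a)^q - (z * W)^q)"
    by (intro binom_qdiv q inR_of_int inR_mult inR_z WR)
  moreover have "qdiv q z (of_int (a^q - a))" by (intro qdiv_of_int fermat_int q)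
  moreover have "qdiv q z ((W^q - W') * z^q)"
    using pCons.IH unfolding W_def W'_def by (intro qdiv_mult inR_pow inR_z)
  ultimately show ?case unfolding e1 e2 by (metis qdiv_add)
qed


lemma eval_Xm: "poly (of_int_poly (Polynomial.monom 1 m - 1 :: int poly)) (x::complex) = x^m - 1"
  by (simp add: hom_distribs poly_monom Polynomial.map_poly_monom)

lemma key_root:
  fixes z :: complex and f h :: "int poly"
  assumes q: "prime q" and qm: "\<not> q dvd m" and m: "m > 0" and zm: "z^m = 1"
    and fh: "f * h = Polynomial.monom 1 m - 1" and fz: "poly (of_int_poly f) z = 0"
  shows "poly (of_int_poly f) (z^q) = 0"
proof (rule ccontr)
  assume nz: "poly (of_int_poly f) (z^q) \<noteq> 0"
  have ev: "poly (of_int_poly f) x * poly (of_int_poly h) x = x^m - 1" for x :: complex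
  proof -
    have "poly (of_int_poly (f * h)) x = x^m - 1" unfolding fh by (rule eval_Xm)
    thus ?thesis by (simp add: hom_distribs)
  qed
  have "(z^q)^m = 1" by (metis power_mult mult.commute zm power_one)
  hence hq: "poly (of_int_poly h) (z^q) = 0" using ev[of "z^q"] nz by simp
  define H where "H = poly (of_int_poly h) z"
  define F' where "F' = poly (of_int_poly (pderiv f)) z"
  have "qdiv q z (H^q)" using frobenius_qdiv[OF q, of z h] hq unfolding H_def by simp
  have "pderiv (f * h) = pderiv (Polynomial.monom 1 m - 1 :: int poly)" unfolding fh ..
  hence "f * pderiv h + h * pderiv f = Polynomial.monom (of_nat m) (m - 1)"
    by (simp add: pderiv_mult pderiv_diff pderiv_monom)
  hence "poly (of_int_poly (f * pderiv h + h * pderiv f)) z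
       = poly (of_int_poly (Polynomial.monom (of_nat m) (m - 1) :: int poly)) z" by simp
  hence "H * F' = of_nat m * z^(m-1)"
    using fz unfolding H_def F'_def by (simp add: hom_distribs poly_monom Polynomial.map_poly_monom)
  hence "(of_nat m * z^(m-1))^q = H^q * F'^q" by (metis power_mult_distrib)
  hence "(of_nat m * z^(m-1))^q * z^q = H^q * (F'^q * z^q)" by (metis mult.assoc)
  moreover have "(of_nat m * z^(m-1))^q * z^q = of_nat (m^q)"
  proof -
    have "(z^(m-1))^q * z^q = (z^(m-1) * z)^q" by (rule power_mult_distrib[symmetric])
    also have "z^(m-1) * z = z^m" using m by (cases m) auto
    finally have "(z^(m-1))^q * z^q = 1" using zm by simp
    have "(of_nat m * z^(m-1))^q * z^q = of_nat m ^ q * ((z^(m-1))^q * z^q)"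
      by (simp only: power_mult_distrib mult.assoc)
    also have "\<dots> = of_nat m ^ q" using \<open>(z^(m-1))^q * z^q = 1\<close> by (simp only: mult_1_right)
    finally show ?thesis by simp
  qed
  moreover have "qdiv q z (H^q * (F'^q * z^q))"
    by (intro qdiv_mult \<open>qdiv q z (H^q)\<close> inR_mult inR_pow inR_z) (auto simp: F'_def inR_def)
  ultimately have "qdiv q z (of_nat (m^q))" by metis
  then obtain A' where A': "inR z A'" "of_nat (m^q) = of_nat q * A'" unfolding qdiv_def by auto
  have q0: "q > 0" using q prime_gt_0_nat by blast
  from A' obtain w where w: "A' = poly (of_int_poly w) z" unfolding inR_def by auto
  have "A' = of_nat (m^q) / of_nat q" using A'(2) q0 by (metis nonzero_mult_div_cancel_left of_nat_eq_0_iff not_gr0)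
  hence "A' \<in> \<rat>" by (metis Rats_divide Rats_of_nat)
  hence "A' \<in> \<int>" using ring_rat_imp_int[OF zm m] w by simp
  then obtain k where k: "A' = of_int k" by (auto elim: Ints_cases)
  have "complex_of_int (int (m^q)) = complex_of_int (int q * k)" using A'(2) k by (metis of_int_mult of_int_of_nat_eq)
  hence "int (m^q) = int q * k" by (simp only: of_int_eq_iff)
  hence "int q dvd int (m^q)" by simp
  hence "q dvd m^q" by (simp only: int_dvd_int_iff)
  hence "q dvd m" using q prime_dvd_power by blast
  thus False using qm by simp
qed


lemma of_rat_of_int_poly: "map_poly (of_rat :: rat \<Rightarrow> complex) (of_int_poly w) = of_int_poly w"
  by (simp add: map_poly_map_poly o_def)

lemma rat_root_q:
  fixes z :: complex and p :: "rat poly"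
  assumes q: "prime q" and qm: "\<not> q dvd m" and m: "m > 0" and zm: "z^m = 1"
    and pz: "poly (map_poly of_rat p) z = 0"
  shows "poly (map_poly of_rat p) (z^q) = 0"
proof -
  obtain d pi where dp: "rat_to_int_poly p = (d, pi)" by force
  from rat_to_int_poly[OF dp] have p: "p = Polynomial.smult (inverse (of_int d)) (of_int_poly pi)" and d: "d > 0"
    by auto
  have evp: "poly (map_poly of_rat p) x = of_rat (inverse (of_int d)) * poly (of_int_poly pi) x" for x :: complex
    by (simp add: p of_rat_hom.map_poly_hom_smult of_rat_of_int_poly)
  have d0: "(of_rat (inverse (of_int d)) :: complex) \<noteq> 0" using d by simp
  have piz: "poly (of_int_poly pi) z = 0" using pz evp[of z] d0 by simp
  define X :: "int poly" where "X = Polynomial.monom 1 m - 1"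
  have X0: "X \<noteq> 0"
  proof
    assume "X = 0"
    hence "Polynomial.coeff X m = 0" by simp
    thus False using m by (simp add: X_def coeff_monom)
  qed
  define g where "g = gcd pi X"
  have "g dvd X" unfolding g_def by simp
  then obtain h where gh: "X = g * h" by (elim dvdE)
  have "g dvd pi" unfolding g_def by simp
  then obtain r where gr: "pi = g * r" by (elim dvdE)
  have g0: "g \<noteq> 0" unfolding g_def using X0 by simp
  define G where "G = gcd (of_int_poly pi :: rat poly) (of_int_poly X)"
  have G: "G = Polynomial.smult (inverse (of_int (lead_coeff g))) (of_int_poly g)"
    unfolding G_def g_def by (rule gcd_rat_to_gcd_int)
  obtain a b where ab: "a * of_int_poly pi + b * of_int_poly X = G"
    using bezout_coefficients_fst_snd unfolding G_def by blast
  have "poly (map_poly of_rat (a * of_int_poly pi + b * of_int_poly X)) z = 0"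
    using piz eval_Xm[of m z] zm by (simp add: hom_distribs of_rat_of_int_poly X_def)
  hence "poly (map_poly of_rat G) z = 0" using ab by simp
  hence "of_rat (inverse (of_int (lead_coeff g))) * poly (of_int_poly g) z = 0"
    unfolding G by (simp add: of_rat_hom.map_poly_hom_smult of_rat_of_int_poly)
  moreover have "(of_rat (inverse (of_int (lead_coeff g))) :: complex) \<noteq> 0" using g0 by simp
  ultimately have gz: "poly (of_int_poly g) z = 0" by simp
  have "poly (of_int_poly g) (z^q) = 0"
    by (rule key_root[OF q qm m zm _ gz, of h]) (simp add: gh[symmetric] X_def)
  hence "poly (of_int_poly pi) (z^q) = 0" by (simp add: gr hom_distribs)
  thus ?thesis using evp[of "z^q"] by simp
qed

lemma rat_root_coprime:
  fixes z :: complex and p :: "rat poly"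
  assumes "m > 0" "algebraic_semidom_class.coprime a m" "z^m = 1" "poly (map_poly of_rat p) z = 0"
  shows "poly (map_poly of_rat p) (z^a) = 0"
  using assms
proof (induction a arbitrary: z rule: less_induct)
  case (less a)
  show ?case
  proof (cases "a \<le> 1")
    case True
    show ?thesis
    proof (cases "a = 0")
      case True
      hence "m = 1" using less.prems(2) by simp
      hence "z = 1" using less.prems(3) by simp
      thus ?thesis using less.prems(4) True by simp
    next
      case False
      hence "a = 1" using \<open>a \<le> 1\<close> by simp
      thus ?thesis using less.prems(4) by simp
    qed
  next
    case False
    then obtain q where q: "prime q" "q dvd a" using prime_factor_nat[of a] by auto
    then obtain b where ab: "a = q * b" by (elim dvdE)
    have b0: "b > 0" using False ab by (cases b) auto
    have q1: "q > 1" using q prime_gt_1_nat by blast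
    have ba: "b < a" using ab q1 b0 by simp
    have qm: "\<not> q dvd m"
    proof
      assume "q dvd m"
      hence "is_unit q" using coprime_common_divisor[OF less.prems(2) q(2)] by simp
      thus False using q by simp
    qed
    have cb: "algebraic_semidom_class.coprime b m" using less.prems(2) ab by simp
    have zq: "(z^q)^m = 1" using less.prems(3) by (metis power_mult mult.commute power_one)
    have pq: "poly (map_poly of_rat p) (z^q) = 0"
      by (rule rat_root_q[OF q(1) qm less.prems(1) less.prems(3) less.prems(4)])
    have "poly (map_poly of_rat p) ((z^q)^b) = 0"
      by (rule less.IH[OF ba less.prems(1) cb zq pq])
    thus ?thesis using ab by (simp add: power_mult)
  qed
qed


lemma xi_pow_m: assumes "m > 0" shows "xi m ^ m = 1"
proof -
  have "xi m ^ m = exp (of_nat m * (2 * pi * \<i> / of_nat m))"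
    unfolding xi_def by (rule exp_of_nat_mult[symmetric])
  also have "of_nat m * (2 * pi * \<i> / of_nat m) = 2 * pi * \<i>" using assms by simp
  finally show ?thesis by simp
qed


lemma pcomp_eval: "poly (map_poly (of_rat :: rat \<Rightarrow> complex) (p \<circ>\<^sub>p Polynomial.monom 1 k)) x =
   poly (map_poly of_rat p) (x^k)"
  by (simp add: of_rat_hom.map_poly_pcompose poly_pcompose Polynomial.map_poly_monom poly_monom)

definition sig :: "nat \<Rightarrow> nat \<Rightarrow> complex \<Rightarrow> complex" where
  "sig m a z = (if z \<in> cyclo_field m then
      poly (map_poly of_rat (SOME p. z = poly (map_poly of_rat p) (xi m))) (xi m ^ a) else z)"

lemma in_cyclo: "poly (map_poly of_rat p) (xi m) \<in> cyclo_field m"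
  unfolding cyclo_field_def by auto

lemma sig_eval:
  assumes m: "m > 0" and a: "algebraic_semidom_class.coprime a m"
  shows "sig m a (poly (map_poly of_rat p) (xi m)) = poly (map_poly of_rat p) (xi m ^ a)"
proof -
  define z where "z = poly (map_poly of_rat p) (xi m)"
  define p0 where "p0 = (SOME p. z = poly (map_poly of_rat p) (xi m))"
  have "\<exists>p. z = poly (map_poly of_rat p) (xi m)" unfolding z_def by auto
  hence p0: "z = poly (map_poly of_rat p0) (xi m)" unfolding p0_def by (rule someI_ex)
  have "poly (map_poly of_rat (p0 - p)) (xi m) = 0" using p0 unfolding z_def by (simp add: hom_distribs)
  hence "poly (map_poly of_rat (p0 - p)) (xi m ^ a) = 0"
    by (rule rat_root_coprime[OF m a xi_pow_m[OF m]])
  hence "poly (map_poly of_rat p0) (xi m ^ a) = poly (map_poly of_rat p) (xi m ^ a)"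
    by (simp add: hom_distribs)
  moreover have "z \<in> cyclo_field m" unfolding z_def by (rule in_cyclo)
  ultimately show ?thesis unfolding sig_def z_def[symmetric] p0_def[symmetric] by simp
qed

lemma sig_gal:
  assumes m: "m > 0" and a: "algebraic_semidom_class.coprime a m"
  shows "sig m a \<in> cyclo_gal m"
proof -
  obtain a' where aa': "[a * a' = Suc 0] (mod m)" using cong_solve_coprime_nat[OF a] by auto
  have a': "algebraic_semidom_class.coprime a' m"
    using aa' by (subst coprime_iff_invertible_nat) (auto simp: mult.commute intro!: exI[of _ a])
  have xm: "xi m ^ m = 1" by (rule xi_pow_m[OF m])
  have inv: "(xi m ^ a) ^ a' = xi m"
  proof -
    have "(xi m ^ a) ^ a' = xi m ^ ((a * a') mod m)"
      by (simp add: power_mult root_unity_pow_mod[OF xm, symmetric])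
    also have "(a * a') mod m = Suc 0 mod m" using aa' by (simp add: cong_def)
    also have "xi m ^ (Suc 0 mod m) = xi m" using root_unity_pow_mod[OF xm, of 1] by simp
    finally show ?thesis .
  qed
  have xam: "(xi m ^ a) ^ m = 1" by (metis power_mult mult.commute xm power_one)
  have img: "sig m a z \<in> cyclo_field m" if "z \<in> cyclo_field m" for z
  proof -
    from that obtain p where p: "z = poly (map_poly of_rat p) (xi m)" unfolding cyclo_field_def by auto
    have "sig m a z = poly (map_poly of_rat (p \<circ>\<^sub>p Polynomial.monom 1 a)) (xi m)"
      unfolding p sig_eval[OF m a] pcomp_eval ..
    thus ?thesis by (simp add: in_cyclo)
  qed
  have "inj_on (sig m a) (cyclo_field m)"
  proof (rule inj_onI)
    fix z1 z2 assume z1: "z1 \<in> cyclo_field m" and z2: "z2 \<in> cyclo_field m" and eq: "sig m a z1 = sig m a z2"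
    from z1 obtain p1 where p1: "z1 = poly (map_poly of_rat p1) (xi m)" unfolding cyclo_field_def by auto
    from z2 obtain p2 where p2: "z2 = poly (map_poly of_rat p2) (xi m)" unfolding cyclo_field_def by auto
    have "poly (map_poly of_rat (p1 - p2)) (xi m ^ a) = 0"
      using eq unfolding p1 p2 sig_eval[OF m a] by (simp add: hom_distribs)
    hence "poly (map_poly of_rat (p1 - p2)) ((xi m ^ a) ^ a') = 0"
      by (rule rat_root_coprime[OF m a' xam])
    thus "z1 = z2" unfolding inv p1 p2 by (simp add: hom_distribs)
  qed
  moreover have "sig m a ` cyclo_field m = cyclo_field m"
  proof
    show "sig m a ` cyclo_field m \<subseteq> cyclo_field m" using img by auto
  next
    show "cyclo_field m \<subseteq> sig m a ` cyclo_field m"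
    proof
      fix w assume "w \<in> cyclo_field m"
      then obtain p where p: "w = poly (map_poly of_rat p) (xi m)" unfolding cyclo_field_def by auto
      define z where "z = poly (map_poly of_rat (p \<circ>\<^sub>p Polynomial.monom 1 a')) (xi m)"
      have "sig m a z = poly (map_poly of_rat p) (((xi m) ^ a) ^ a')"
        unfolding z_def by (simp only: sig_eval[OF m a]) (simp add: pcomp_eval power_mult mult.commute)
      hence "sig m a z = w" unfolding inv p .
      moreover have "z \<in> cyclo_field m" unfolding z_def by (rule in_cyclo)
      ultimately show "w \<in> sig m a ` cyclo_field m" by blast
    qed
  qed
  moreover have "sig m a 1 = 1"
    using sig_eval[OF m a, of 1] by simp
  moreover have "sig m a (x + y) = sig m a x + sig m a y \<and> sig m a (x * y) = sig m a x * sig m a y"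
    if "x \<in> cyclo_field m" "y \<in> cyclo_field m" for x y
  proof -
    from that obtain p1 p2 where p1: "x = poly (map_poly of_rat p1) (xi m)"
      and p2: "y = poly (map_poly of_rat p2) (xi m)" unfolding cyclo_field_def by auto
    have e: "x + y = poly (map_poly of_rat (p1 + p2)) (xi m)" "x * y = poly (map_poly of_rat (p1 * p2)) (xi m)"
      unfolding p1 p2 by (simp_all add: hom_distribs)
    show ?thesis by (simp only: e sig_eval[OF m a]) (simp add: p1 p2 sig_eval[OF m a] hom_distribs)
  qed
  ultimately show ?thesis unfolding cyclo_gal_def bij_betw_def by blast
qed


lemma powi_root:
  fixes z :: complex assumes zm: "z^m = 1" and m: "m > 0"
  shows "z powi j = z ^ nat (j mod int m)"
proof -
  have z0: "z \<noteq> 0" using zm m by (metis power_0_left zero_neq_one gr_implies_not0)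
  have "j = int m * (j div int m) + j mod int m" by simp
  hence "z powi j = z powi (int m * (j div int m)) * z powi (j mod int m)"
    by (metis power_int_add z0)
  also have "z powi (int m * (j div int m)) = 1"
    by (simp add: power_int_mult zm)
  also have "z powi (j mod int m) = z ^ nat (j mod int m)"
    using m by (simp add: power_int_def)
  finally show ?thesis by simp
qed

lemma xi_pow_ne1:
  assumes m: "m > 0" and r: "0 < r" "r < m"
  shows "xi m ^ r \<noteq> 1"
proof
  assume h: "xi m ^ r = 1"
  have "xi m ^ r = exp (of_nat r * (2 * pi * \<i> / of_nat m))"
    unfolding xi_def by (rule exp_of_nat_mult[symmetric])
  also have "\<dots> = cis (2 * pi * r / m)"
    by (simp add: cis_conv_exp mult_ac)
  finally have "cis (2 * pi * r / m) = 1" using h by simp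
  hence "cos (2 * pi * r / m) = 1" by (metis Re_complex_of_real cis.sel(1) one_complex.sel(1))
  then obtain n :: int where n: "2 * pi * r / m = of_int n * 2 * pi" using cos_one_2pi_int by blast
  hence "real r = real_of_int n * real m" using m by (simp add: field_simps)
  hence rn: "int r = n * int m" by (metis of_int_eq_iff of_int_mult of_int_of_nat_eq)
  have "0 < n * int m" using rn r by simp
  hence "n > 0" using m by (simp add: zero_less_mult_iff)
  hence "1 * int m \<le> n * int m" by (intro mult_right_mono) simp_all
  hence "int m \<le> int r" unfolding rn by (simp only: mult_1)
  thus False using r by linarith
qed

definition rho :: "nat \<Rightarrow> int \<Rightarrow> complex" where
  "rho d j = (\<Sum>b\<in>{b\<in>{..<d}. algebraic_semidom_class.coprime b d}. (xi d powi j) ^ b)"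

lemma geom_root:
  assumes m: "m > 0"
  shows "(\<Sum>a<m. (xi m powi j) ^ a) = (if int m dvd j then of_nat m else 0)"
proof -
  have xm: "xi m ^ m = 1" by (rule xi_pow_m[OF m])
  define r where "r = nat (j mod int m)"
  have z: "xi m powi j = xi m ^ r" unfolding r_def by (rule powi_root[OF xm m])
  have zm: "(xi m ^ r) ^ m = 1" by (metis power_mult mult.commute xm power_one)
  show ?thesis
  proof (cases "int m dvd j")
    case True
    hence "r = 0" unfolding r_def by simp
    thus ?thesis using True z by simp
  next
    case False
    have h1: "0 \<le> j mod int m" "j mod int m < int m" using m by simp_all
    have h2: "j mod int m \<noteq> 0" using False by (simp add: dvd_eq_mod_eq_0)
    have "r > 0" "r < m" unfolding r_def using h1 h2 by auto
    hence "xi m ^ r \<noteq> 1" by (intro xi_pow_ne1 m)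
    hence "(\<Sum>a<m. (xi m powi j) ^ a) = (1 - (xi m ^ r) ^ m) / (1 - xi m ^ r)"
      unfolding z by (subst sum_gp_strict) (simp only: if_False)
    also have "\<dots> = 0" unfolding zm by simp
    finally show ?thesis using False by simp
  qed
qed


lemma xi_pow_div: assumes m: "m > 0" and dm: "d * k = m" shows "xi m ^ k = xi d"
proof -
  have d0: "d > 0" "k > 0" using m dm by (auto intro: gr0I)
  have "xi m ^ k = exp (of_nat k * (2 * pi * \<i> / of_nat m))"
    unfolding xi_def by (rule exp_of_nat_mult[symmetric])
  also have "of_nat k * (2 * pi * \<i> / of_nat m) = 2 * pi * \<i> / of_nat d"
    using d0 unfolding dm[symmetric] by (simp add: field_simps)
  finally show ?thesis unfolding xi_def .
qed

lemma ram_sum: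
  assumes m: "m > 0"
  shows "(\<Sum>d\<in>{d. d dvd m}. rho d j) = (if int m dvd j then of_nat m else 0)"
proof -
  define U :: "nat \<Rightarrow> nat set" where "U = (\<lambda>d. {b\<in>{..<d}. algebraic_semidom_class.coprime b d})"
  define D :: "nat set" where "D = {d. d dvd m}"
  have finD: "finite D" unfolding D_def using m by (simp add: finite_divisors_nat)
  have "(\<Sum>d\<in>D. rho d j) = (\<Sum>d\<in>D. \<Sum>b\<in>U d. (xi d powi j) ^ b)"
    unfolding rho_def U_def ..
  also have "\<dots> = (\<Sum>(d,b)\<in>Sigma D U. (xi d powi j) ^ b)"
    by (rule sum.Sigma) (use finD in \<open>auto simp: U_def\<close>)
  also have "\<dots> = (\<Sum>a<m. (xi m powi j) ^ a)"
  proof (rule sym, rule sum.reindex_bij_witness[where i = "\<lambda>(d,b). (m div d) * b"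
        and j = "\<lambda>a. (m div gcd a m, a div gcd a m)"])
    fix a assume a: "a \<in> {..<m}"
    define g where "g = gcd a m"
    have g0: "g > 0" unfolding g_def using m by simp
    have gm: "g dvd m" "g dvd a" unfolding g_def by simp_all
    obtain c where c: "m = g * c" using gm(1) by (elim dvdE)
    obtain a' where a': "a = g * a'" using gm(2) by (elim dvdE)
    have mgc: "m div g = c" using c g0 by simp
    have c0: "c > 0" using c m by (simp add: gr0I)
    have mg: "m div (m div g) = g" unfolding mgc using c c0 by simp
    show "(case (m div gcd a m, a div gcd a m) of (d, b) \<Rightarrow> m div d * b) = a"
      using mg gm unfolding g_def[symmetric] by simp
    have "a' < c" using a c a' g0 by (simp add: mult_less_cancel1)
    hence "a div g < m div g" using mgc a' g0 by simp
    moreover have "m div g dvd m" unfolding mgc c by simp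
    moreover have "algebraic_semidom_class.coprime (a div g) (m div g)"
      unfolding g_def using m by (intro div_gcd_coprime) simp
    ultimately show "(m div gcd a m, a div gcd a m) \<in> Sigma D U"
      unfolding g_def[symmetric] D_def U_def by simp
    have "xi (m div g) = xi m ^ g" using m gm by (intro xi_pow_div[symmetric]) simp_all
    hence "(xi (m div g) powi j) ^ (a div g) = ((xi m powi j) ^ g) ^ (a div g)"
      by (simp add: power_int_power power_int_power' mult.commute)
    also have "\<dots> = (xi m powi j) ^ a" using gm by (simp add: power_mult[symmetric])
    finally show "(case (m div gcd a m, a div gcd a m) of (d, b) \<Rightarrow> (xi d powi j) ^ b) = (xi m powi j) ^ a"
      unfolding g_def[symmetric] by simp
  next
    fix x assume x: "x \<in> Sigma D U"
    then obtain d b where x: "x = (d, b)" and d: "d dvd m" and b: "b < d" "algebraic_semidom_class.coprime b d"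
      unfolding D_def U_def by auto
    define k where "k = m div d"
    have mk: "m = k * d" unfolding k_def using d by simp
    have k0: "k > 0" using mk m by (simp add: gr0I)
    have "gcd (k * b) m = k * gcd b d" unfolding mk by (simp add: gcd_mult_distrib_nat)
    hence gg: "gcd (k * b) m = k" using b by simp
    show "(case case x of (d, b) \<Rightarrow> m div d * b of a \<Rightarrow> (m div gcd a m, a div gcd a m)) = x"
      unfolding x k_def[symmetric] using gg k0 mk b by simp
    show "(case x of (d, b) \<Rightarrow> m div d * b) \<in> {..<m}"
      unfolding x k_def[symmetric] using b k0 mk by simp
  qed
  also have "\<dots> = (if int m dvd j then of_nat m else 0)" by (rule geom_root[OF m])
  finally show ?thesis unfolding D_def .
qed


definition ind :: "nat \<Rightarrow> int \<Rightarrow> complex" where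
  "ind e j = (if int e dvd j then 1 else 0)"

lemma rho_expansion:
  assumes "m > 0" "m \<le> M"
  shows "\<exists>\<alpha>::nat\<Rightarrow>int. \<forall>j. rho m j = (\<Sum>e\<in>{1..M}. of_int (\<alpha> e) * ind e j)"
  using assms
proof (induction m rule: less_induct)
  case (less m)
  define D' where "D' = {d. d dvd m} - {m}"
  have finD: "finite {d. d dvd m}" using less.prems by (simp add: finite_divisors_nat)
  have D'prop: "0 < d \<and> d < m" if "d \<in> D'" for d
    using that less.prems unfolding D'_def by (auto intro: gr0I dest: dvd_imp_le)
  have "\<forall>d\<in>D'. \<exists>\<alpha>::nat\<Rightarrow>int. \<forall>j. rho d j = (\<Sum>e\<in>{1..M}. of_int (\<alpha> e) * ind e j)"
    using D'prop less.IH less.prems by force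
  then obtain A where A: "\<And>d j. d \<in> D' \<Longrightarrow> rho d j = (\<Sum>e\<in>{1..M}. of_int (A d e) * ind e j)"
    by metis
  define \<alpha> where "\<alpha> = (\<lambda>e. (if e = m then int m else 0) - (\<Sum>d\<in>D'. A d e))"
  have "\<forall>j. rho m j = (\<Sum>e\<in>{1..M}. of_int (\<alpha> e) * ind e j)"
  proof
    fix j
    have "(\<Sum>d\<in>{d. d dvd m}. rho d j) = rho m j + (\<Sum>d\<in>D'. rho d j)"
      unfolding D'_def using finD by (subst sum.remove[of _ m]) auto
    hence "rho m j = (if int m dvd j then of_nat m else 0) - (\<Sum>d\<in>D'. rho d j)"
      using ram_sum[OF less.prems(1), of j] by (simp add: algebra_simps)
    also have "(if int m dvd j then of_nat m else 0) = (\<Sum>e\<in>{1..M}. of_int (if e = m then int m else 0) * ind e j)"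
    proof -
      have "(\<Sum>e\<in>{1..M}. of_int (if e = m then int m else 0) * ind e j) =
            (\<Sum>e\<in>{1..M}. if e = m then of_nat m * ind m j else 0)"
        by (intro sum.cong) auto
      also have "\<dots> = of_nat m * ind m j" using less.prems by (simp add: sum.delta')
      finally show ?thesis by (simp add: ind_def)
    qed
    also have "(\<Sum>d\<in>D'. rho d j) = (\<Sum>d\<in>D'. \<Sum>e\<in>{1..M}. of_int (A d e) * ind e j)"
      using A by simp
    also have "\<dots> = (\<Sum>e\<in>{1..M}. \<Sum>d\<in>D'. of_int (A d e) * ind e j)" by (rule sum.swap)
    also have "(\<Sum>e\<in>{1..M}. of_int (if e = m then int m else 0) * ind e j) - \<dots>
        = (\<Sum>e\<in>{1..M}. of_int (\<alpha> e) * ind e j)"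
      unfolding \<alpha>_def by (simp add: sum_subtractf[symmetric] algebra_simps sum_distrib_right sum_distrib_left)
    finally show "rho m j = (\<Sum>e\<in>{1..M}. of_int (\<alpha> e) * ind e j)" .
  qed
  thus ?case by blast
qed


definition qf :: "(nat \<Rightarrow> nat \<Rightarrow> real) \<Rightarrow> nat set \<Rightarrow> (nat \<Rightarrow> real) \<Rightarrow> real" where
  "qf A I x = (\<Sum>i\<in>I. \<Sum>j\<in>I. A i j * x i * x j)"

lemma qf_insert:
  assumes "finite I" "e \<notin> I"
  shows "qf A (insert e I) x = A e e * (x e)^2 + x e * (\<Sum>j\<in>I. (A e j + A j e) * x j) + qf A I x"
proof -
  have "qf A (insert e I) x = (\<Sum>j\<in>insert e I. A e j * x e * x j) + (\<Sum>i\<in>I. \<Sum>j\<in>insert e I. A i j * x i * x j)"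
    unfolding qf_def using assms by (simp add: sum.insert)
  also have "(\<Sum>j\<in>insert e I. A e j * x e * x j) = A e e * (x e)^2 + (\<Sum>j\<in>I. A e j * x e * x j)"
    using assms by (simp add: sum.insert power2_eq_square)
  also have "(\<Sum>i\<in>I. \<Sum>j\<in>insert e I. A i j * x i * x j) = (\<Sum>i\<in>I. A i e * x i * x e) + qf A I x"
    unfolding qf_def using assms by (simp add: sum.insert sum.distrib)
  also have "(\<Sum>j\<in>I. A e j * x e * x j) + (\<Sum>i\<in>I. A i e * x i * x e) = x e * (\<Sum>j\<in>I. (A e j + A j e) * x j)"
    by (simp add: sum_distrib_left sum.distrib[symmetric] algebra_simps)
  ultimately show ?thesis by (simp add: algebra_simps)
qed

lemma sq_complete:
  fixes a t L Q :: real assumes "a \<noteq> 0"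
  shows "a * t^2 + t * L + Q = a * (t + L / (2 * a))^2 + (Q - L^2 / (4 * a))"
  using assms by (simp add: field_simps power2_eq_square)

lemma qf_cong: "(\<And>i. i \<in> I \<Longrightarrow> x i = y i) \<Longrightarrow> qf A I x = qf A I y"
  unfolding qf_def by (intro sum.cong refl) auto

lemma pd_bound:
  assumes "finite I"
    and "\<forall>x. (\<exists>i\<in>I. x i \<noteq> 0) \<longrightarrow> qf A I x > 0"
  shows "\<exists>B. \<forall>x. qf A I x \<le> N \<longrightarrow> (\<forall>i\<in>I. \<bar>x i\<bar> \<le> B)"
  using assms
proof (induction I arbitrary: A N rule: finite_induct)
  case empty
  show ?case by auto
next
  case (insert e I)
  note pd = insert.prems
  define a where "a = A e e"
  have "qf A (insert e I) (\<lambda>i. if i = e then 1 else 0) > 0" using pd by auto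
  moreover have "(\<Sum>j\<in>I. (A e j + A j e) * (if j = e then 1 else 0)) = 0"
    using insert.hyps(2) by (intro sum.neutral) auto
  moreover have "qf A I (\<lambda>i. if i = e then 1 else 0) = 0"
    unfolding qf_def using insert.hyps(2) by (auto intro!: sum.neutral)
  ultimately have a0: "a > 0" unfolding a_def qf_insert[OF insert.hyps] by simp
  define c where "c = (\<lambda>j. A e j + A j e)"
  define L where "L = (\<lambda>x. \<Sum>j\<in>I. c j * x j)"
  define A' where "A' = (\<lambda>i j. A i j - c i * c j / (4 * a))"
  have LL: "(L x)^2 = (\<Sum>i\<in>I. \<Sum>j\<in>I. c i * c j * x i * x j)" for x
    unfolding L_def power2_eq_square sum_product by (simp add: algebra_simps)
  have qA': "qf A' I x = qf A I x - (L x)^2 / (4 * a)" for x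
    unfolding qf_def A'_def LL by (simp add: algebra_simps sum_subtractf sum_divide_distrib)
  have decomp: "qf A (insert e I) x = a * (x e + L x / (2 * a))^2 + qf A' I x" for x
  proof -
    have "qf A (insert e I) x = a * (x e)^2 + x e * L x + qf A I x"
      unfolding qf_insert[OF insert.hyps] L_def c_def a_def ..
    also have "\<dots> = a * (x e + L x / (2 * a))^2 + (qf A I x - (L x)^2 / (4 * a))"
      using a0 by (intro sq_complete) simp
    finally show ?thesis unfolding qA' .
  qed
  have pd': "\<forall>x. (\<exists>i\<in>I. x i \<noteq> 0) \<longrightarrow> qf A' I x > 0"
  proof (intro allI impI)
    fix x :: "nat \<Rightarrow> real" assume nz: "\<exists>i\<in>I. x i \<noteq> 0"
    define y where "y = x(e := - L x / (2 * a))"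
    have yx: "\<And>i. i \<in> I \<Longrightarrow> y i = x i" unfolding y_def using insert.hyps by auto
    have Ly: "L y = L x" unfolding L_def using yx by (intro sum.cong) auto
    have "\<exists>i\<in>insert e I. y i \<noteq> 0" using nz yx by auto
    hence pos: "qf A (insert e I) y > 0" using pd by blast
    have ye: "y e = - L x / (2 * a)" unfolding y_def by simp
    have z: "y e + L y / (2 * a) = 0" unfolding ye Ly by simp
    have "qf A' I y > 0" using pos unfolding decomp z by simp
    thus "qf A' I x > 0" using qf_cong[of I y x A'] yx by simp
  qed
  have nonneg: "qf A' I x \<ge> 0" for x
  proof (cases "\<exists>i\<in>I. x i \<noteq> 0")
    case True thus ?thesis using pd' by (simp add: less_imp_le)
  next
    case False thus ?thesis unfolding qf_def by simp
  qed
  obtain B' where B': "\<And>x. qf A' I x \<le> N \<Longrightarrow> \<forall>i\<in>I. \<bar>x i\<bar> \<le> B'"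
    using insert.IH[OF pd'] by blast
  define C where "C = (\<Sum>j\<in>I. \<bar>c j\<bar> * B')"
  define B where "B = max B' (sqrt (\<bar>N\<bar> / a) + C / (2 * a))"
  have "\<forall>i\<in>insert e I. \<bar>x i\<bar> \<le> B" if le: "qf A (insert e I) x \<le> N" for x
  proof -
    have sq: "a * (x e + L x / (2 * a))^2 \<ge> 0" using a0 by simp
    have "qf A' I x \<le> N" using le sq unfolding decomp by linarith
    hence xb: "\<forall>i\<in>I. \<bar>x i\<bar> \<le> B'" by (rule B')
    have "\<bar>L x\<bar> \<le> (\<Sum>j\<in>I. \<bar>c j * x j\<bar>)" unfolding L_def by (rule sum_abs)
    also have "\<dots> \<le> C" unfolding C_def using xb
      by (intro sum_mono) (simp add: abs_mult mult_left_mono)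
    finally have LC: "\<bar>L x\<bar> \<le> C" .
    have "a * (x e + L x / (2 * a))^2 \<le> \<bar>N\<bar>" using le nonneg[of x] unfolding decomp by linarith
    hence "(x e + L x / (2 * a))^2 \<le> \<bar>N\<bar> / a" using a0 by (simp add: field_simps mult.commute)
    hence "\<bar>x e + L x / (2 * a)\<bar> \<le> sqrt (\<bar>N\<bar> / a)" using real_sqrt_le_mono by fastforce
    moreover have "\<bar>L x / (2 * a)\<bar> \<le> C / (2 * a)" using LC a0 by (simp add: divide_right_mono abs_divide)
    ultimately have "\<bar>x e\<bar> \<le> sqrt (\<bar>N\<bar> / a) + C / (2 * a)" by linarith
    thus ?thesis using xb unfolding B_def by auto
  qed
  thus ?case by blast
qed

lemma finite_level:
  assumes pd: "int_pd_qform n Q"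
  shows "finite {k\<in>Zn n. Q k = N}"
proof -
  from pd obtain A where A: "\<forall>k\<in>Zn n. real_of_int (Q k) = (\<Sum>i<n. \<Sum>j<n. A i j * real_of_int (k i) * real_of_int (k j))"
    and P: "\<forall>x :: nat \<Rightarrow> real. (\<exists>i<n. x i \<noteq> 0) \<longrightarrow> (\<Sum>i<n. \<Sum>j<n. A i j * x i * x j) > 0"
    unfolding int_pd_qform_def by blast
  have "\<forall>x. (\<exists>i\<in>{..<n}. x i \<noteq> 0) \<longrightarrow> qf A {..<n} x > 0" using P unfolding qf_def by auto
  then obtain B where B: "\<And>x. qf A {..<n} x \<le> of_int N \<Longrightarrow> \<forall>i\<in>{..<n}. \<bar>x i\<bar> \<le> B"
    using pd_bound[of "{..<n}" A "of_int N"] by blast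
  define b where "b = \<lceil>B\<rceil>"
  have "{k\<in>Zn n. Q k = N} \<subseteq> {f. \<forall>x. (x \<in> {..<n} \<longrightarrow> f x \<in> {-b..b}) \<and> (x \<notin> {..<n} \<longrightarrow> f x = 0)}"
  proof
    fix k assume kk: "k \<in> {k\<in>Zn n. Q k = N}"
    hence k: "k \<in> Zn n" "Q k = N" by auto
    show "k \<in> {f. \<forall>x. (x \<in> {..<n} \<longrightarrow> f x \<in> {-b..b}) \<and> (x \<notin> {..<n} \<longrightarrow> f x = 0)}"
    proof (intro CollectI allI conjI impI)
      fix x assume x: "x \<in> {..<n}"
      have "qf A {..<n} (\<lambda>i. real_of_int (k i)) = of_int N" using A k unfolding qf_def by auto
      hence "\<forall>i\<in>{..<n}. \<bar>real_of_int (k i)\<bar> \<le> B" by (intro B) simp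
      hence "\<bar>real_of_int (k x)\<bar> \<le> B" using x by auto
      hence "\<bar>k x\<bar> \<le> b" unfolding b_def by linarith
      thus "k x \<in> {-b..b}" by auto
    next
      fix x assume "x \<notin> {..<n}"
      thus "k x = 0" using k unfolding Zn_def by auto
    qed
  qed
  moreover have "finite {f. \<forall>x. (x \<in> {..<n} \<longrightarrow> f x \<in> {-b..b}) \<and> (x \<notin> {..<n} \<longrightarrow> f x = (0::int))}"
    by (rule finite_set_of_finite_funs) auto
  ultimately show ?thesis by (rule finite_subset)
qed


lemma poly_sum_monom:
  "poly (map_poly (of_rat :: rat \<Rightarrow> complex) (\<Sum>k\<in>S. Polynomial.monom 1 (r k))) x = (\<Sum>k\<in>S. x ^ r k)"
  by (simp add: rq.hom_sum poly_sum Polynomial.map_poly_monom poly_monom)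

lemma coeff_invariance:
  fixes S :: "(nat \<Rightarrow> int) set"
  assumes m: "m > 0" and a: "algebraic_semidom_class.coprime a m"
    and inv: "\<forall>g\<in>cyclo_gal m. g (\<Sum>k\<in>S. xi m powi (k 0)) = (\<Sum>k\<in>S. xi m powi (k 0))"
  shows "(\<Sum>k\<in>S. xi m powi (k 0)) = (\<Sum>k\<in>S. (xi m powi (k 0)) ^ a)"
proof -
  have xm: "xi m ^ m = 1" by (rule xi_pow_m[OF m])
  define r where "r = (\<lambda>k::nat\<Rightarrow>int. nat (k 0 mod int m))"
  define P where "P = (\<Sum>k\<in>S. Polynomial.monom (1::rat) (r k))"
  have pw: "xi m powi (k 0) = xi m ^ r k" for k unfolding r_def by (rule powi_root[OF xm m])
  have c: "(\<Sum>k\<in>S. xi m powi (k 0)) = poly (map_poly of_rat P) (xi m)"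
    unfolding P_def poly_sum_monom pw ..
  have "sig m a (\<Sum>k\<in>S. xi m powi (k 0)) = poly (map_poly of_rat P) (xi m ^ a)"
    unfolding c by (rule sig_eval[OF m a])
  also have "\<dots> = (\<Sum>k\<in>S. (xi m powi (k 0)) ^ a)"
    unfolding P_def poly_sum_monom pw by (simp add: power_mult[symmetric] mult.commute)
  finally show ?thesis using inv sig_gal[OF m a] by metis
qed

definition Qe :: "((nat \<Rightarrow> int) \<Rightarrow> int) \<Rightarrow> nat \<Rightarrow> (nat \<Rightarrow> int) \<Rightarrow> int" where
  "Qe Q e k = Q (k(0 := int e * k 0))"

lemma Zn_upd: "n > 0 \<Longrightarrow> k \<in> Zn n \<Longrightarrow> k(0 := v) \<in> Zn n"
  unfolding Zn_def by auto

lemma card_Qe: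
  assumes n: "n > 0" and e: "e > 0"
  shows "card {k\<in>Zn n. Qe Q e k = N} = card {k\<in>Zn n. Q k = N \<and> int e dvd k 0}"
proof -
  define f where "f = (\<lambda>k::nat\<Rightarrow>int. k(0 := int e * k 0))"
  have f0: "f k 0 = int e * k 0" for k unfolding f_def by simp
  have fi: "i \<noteq> 0 \<Longrightarrow> f k i = k i" for k i unfolding f_def by simp
  have inj: "inj_on f {k\<in>Zn n. Qe Q e k = N}"
  proof (rule inj_onI)
    fix k k' assume h: "f k = f k'"
    show "k = k'"
    proof
      fix i show "k i = k' i"
      proof (cases "i = 0")
        case True
        have "int e * k 0 = int e * k' 0" using h f0 by metis
        thus ?thesis using e True by simp
      next
        case False thus ?thesis using h fi by metis
      qed
    qed
  qed
  have img: "f ` {k\<in>Zn n. Qe Q e k = N} = {k\<in>Zn n. Q k = N \<and> int e dvd k 0}"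
  proof
    show "f ` {k\<in>Zn n. Qe Q e k = N} \<subseteq> {k\<in>Zn n. Q k = N \<and> int e dvd k 0}"
    proof
      fix x assume "x \<in> f ` {k\<in>Zn n. Qe Q e k = N}"
      then obtain k where k: "k \<in> Zn n" "Qe Q e k = N" and x: "x = f k" by blast
      have "x \<in> Zn n" unfolding x f_def by (rule Zn_upd[OF n k(1)])
      moreover have "Q x = N" using k(2) unfolding x f_def Qe_def .
      moreover have "int e dvd x 0" unfolding x f0 by simp
      ultimately show "x \<in> {k\<in>Zn n. Q k = N \<and> int e dvd k 0}" by blast
    qed
  next
    show "{k\<in>Zn n. Q k = N \<and> int e dvd k 0} \<subseteq> f ` {k\<in>Zn n. Qe Q e k = N}"
    proof
      fix k assume k: "k \<in> {k\<in>Zn n. Q k = N \<and> int e dvd k 0}"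
      hence kZ: "k \<in> Zn n" and kQ: "Q k = N" and kd: "int e dvd k 0" by auto
      from kd obtain t where t: "k 0 = int e * t" by (elim dvdE)
      define k' where "k' = k(0 := t)"
      have fk: "f k' = k" unfolding f_def k'_def using t by (intro ext) simp
      have "k' \<in> Zn n" unfolding k'_def by (rule Zn_upd[OF n kZ])
      moreover have "Qe Q e k' = N" using kQ unfolding Qe_def fk[unfolded f_def] .
      ultimately have kk: "k' \<in> {k\<in>Zn n. Qe Q e k = N}" by blast
      have "f k' \<in> f ` {k\<in>Zn n. Qe Q e k = N}" using kk by (rule imageI)
      thus "k \<in> f ` {k\<in>Zn n. Qe Q e k = N}" unfolding fk .
    qed
  qed
  show ?thesis using card_image[OF inj] unfolding img by simp
qed

lemma pd_Qe:
  assumes n: "n > 0" and e: "e > 0" and pd: "int_pd_qform n Q"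
  shows "int_pd_qform n (Qe Q e)"
proof -
  from pd obtain A where A: "\<forall>k\<in>Zn n. real_of_int (Q k) = (\<Sum>i<n. \<Sum>j<n. A i j * real_of_int (k i) * real_of_int (k j))"
    and P: "\<forall>x :: nat \<Rightarrow> real. (\<exists>i<n. x i \<noteq> 0) \<longrightarrow> (\<Sum>i<n. \<Sum>j<n. A i j * x i * x j) > 0"
    unfolding int_pd_qform_def by blast
  define w where "w = (\<lambda>i::nat. if i = 0 then real e else 1)"
  define A' where "A' = (\<lambda>i j. A i j * w i * w j)"
  have w0: "w i \<noteq> 0" for i using e unfolding w_def by simp
  have eq: "(\<Sum>i<n. \<Sum>j<n. A' i j * x i * x j) = (\<Sum>i<n. \<Sum>j<n. A i j * (w i * x i) * (w j * x j))" for x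
    unfolding A'_def by (simp add: algebra_simps)
  show ?thesis unfolding int_pd_qform_def
  proof (intro exI[of _ A'] conjI ballI allI impI)
    fix k assume k: "k \<in> Zn n"
    have "real_of_int (Qe Q e k) = (\<Sum>i<n. \<Sum>j<n. A i j * real_of_int ((k(0 := int e * k 0)) i) * real_of_int ((k(0 := int e * k 0)) j))"
      unfolding Qe_def using A Zn_upd[OF n k] by blast
    also have "\<dots> = (\<Sum>i<n. \<Sum>j<n. A i j * (w i * real_of_int (k i)) * (w j * real_of_int (k j)))"
      by (intro sum.cong refl) (simp add: w_def)
    finally show "real_of_int (Qe Q e k) = (\<Sum>i<n. \<Sum>j<n. A' i j * real_of_int (k i) * real_of_int (k j))"
      unfolding eq .
  next
    fix x :: "nat \<Rightarrow> real" assume "\<exists>i<n. x i \<noteq> 0"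
    hence "\<exists>i<n. w i * x i \<noteq> 0" using w0 by auto
    hence "(\<Sum>i<n. \<Sum>j<n. A i j * (w i * x i) * (w j * x j)) > 0" using P[rule_format, of "\<lambda>i. w i * x i"] by simp
    thus "(\<Sum>i<n. \<Sum>j<n. A' i j * x i * x j) > 0" unfolding eq .
  qed
qed


theorem proposition3p2:
  fixes n m :: nat and Q :: "(nat \<Rightarrow> int) \<Rightarrow> int"
  assumes "n > 0" and "m > 0"
    and "int_pd_qform n Q"
    and "\<forall>g\<in>cyclo_gal m. \<forall>N. g (fps_nth (theta_m n Q m) N) = fps_nth (theta_m n Q m) N"
  shows "\<exists>(r :: nat) (c :: nat \<Rightarrow> rat) (Qs :: nat \<Rightarrow> (nat \<Rightarrow> int) \<Rightarrow> int).
           (\<forall>i<r. int_pd_qform n (Qs i)) \<and>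
           theta_m n Q m = (\<Sum>i<r. fps_const (of_rat (c i)) * theta n (Qs i))"
proof -
  note n = assms(1) and m = assms(2) and pd = assms(3) and hyp = assms(4)
  define U where "U = {a \<in> {..<m}. algebraic_semidom_class.coprime a m}"
  define S where "S = (\<lambda>N::nat. {k\<in>Zn n. Q k = int N})"
  define T where "T = (\<lambda>(e::nat) (N::nat). card {k\<in>Zn n. Qe Q e k = int N})"
  have cN: "fps_nth (theta_m n Q m) N = (\<Sum>k\<in>S N. xi m powi (k 0))" for N
    unfolding theta_m_def S_def by simp
  obtain \<alpha> where \<alpha>: "\<And>j. rho m j = (\<Sum>e\<in>{1..m}. of_int (\<alpha> e) * ind e j)"
    using rho_expansion[OF m order.refl] by blast
  have finU: "finite U" unfolding U_def by simp
  have "U \<noteq> {}"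
  proof (cases "m = 1")
    case True thus ?thesis unfolding U_def by auto
  next
    case False hence "1 \<in> U" unfolding U_def using m by auto
    thus ?thesis by auto
  qed
  hence U0: "card U > 0" using finU by (simp add: card_gt_0_iff)
  define Qs where "Qs = (\<lambda>i. Qe Q (Suc i))"
  define c where "c = (\<lambda>i. rat_of_int (\<alpha> (Suc i)) / rat_of_nat (card U))"
  have main: "of_nat (card U) * fps_nth (theta_m n Q m) N = (\<Sum>e\<in>{1..m}. of_int (\<alpha> e) * of_nat (T e N))" for N
  proof -
    have fin: "finite (S N)" unfolding S_def by (rule finite_level[OF pd])
    have inv: "\<forall>g\<in>cyclo_gal m. g (\<Sum>k\<in>S N. xi m powi (k 0)) = (\<Sum>k\<in>S N. xi m powi (k 0))"
      using hyp unfolding cN by blast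
    have each: "(\<Sum>k\<in>S N. xi m powi (k 0)) = (\<Sum>k\<in>S N. (xi m powi (k 0)) ^ a)" if "a \<in> U" for a
      using that unfolding U_def by (intro coeff_invariance[OF m _ inv]) auto
    have "of_nat (card U) * fps_nth (theta_m n Q m) N = (\<Sum>a\<in>U. \<Sum>k\<in>S N. xi m powi (k 0))"
      unfolding cN by simp
    also have "\<dots> = (\<Sum>a\<in>U. \<Sum>k\<in>S N. (xi m powi (k 0)) ^ a)"
      using each by (rule sum.cong[OF refl])
    also have "\<dots> = (\<Sum>k\<in>S N. \<Sum>a\<in>U. (xi m powi (k 0)) ^ a)" by (rule sum.swap)
    also have "\<dots> = (\<Sum>k\<in>S N. rho m (k 0))" unfolding rho_def U_def ..
    also have "\<dots> = (\<Sum>k\<in>S N. \<Sum>e\<in>{1..m}. of_int (\<alpha> e) * ind e (k 0))" unfolding \<alpha> ..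
    also have "\<dots> = (\<Sum>e\<in>{1..m}. of_int (\<alpha> e) * (\<Sum>k\<in>S N. ind e (k 0)))"
      by (subst sum.swap) (simp add: sum_distrib_left)
    also have "\<dots> = (\<Sum>e\<in>{1..m}. of_int (\<alpha> e) * of_nat (T e N))"
    proof (intro sum.cong refl)
      fix e assume e: "e \<in> {1..m}"
      have "(\<Sum>k\<in>S N. ind e (k 0)) = of_nat (card {k\<in>S N. int e dvd k 0})"
        unfolding ind_def using sum.inter_filter[OF fin, of "\<lambda>_. (1::complex)" "\<lambda>k. int e dvd k 0"] by simp
      also have "{k\<in>S N. int e dvd k 0} = {k\<in>Zn n. Q k = int N \<and> int e dvd k 0}" unfolding S_def by auto
      also have "card \<dots> = T e N" unfolding T_def using e by (intro card_Qe[symmetric] n) auto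
      finally show "of_int (\<alpha> e) * (\<Sum>k\<in>S N. ind e (k 0)) = of_int (\<alpha> e) * of_nat (T e N)" by simp
    qed
    finally show ?thesis .
  qed
  show ?thesis
  proof (intro exI[of _ m] exI[of _ c] exI[of _ Qs] conjI allI impI)
    fix i assume "i < m"
    show "int_pd_qform n (Qs i)" unfolding Qs_def by (rule pd_Qe[OF n _ pd]) simp
  next
    show "theta_m n Q m = (\<Sum>i<m. fps_const (of_rat (c i)) * theta n (Qs i))"
    proof (subst fps_eq_iff, intro allI)
      fix N
      have "fps_nth (\<Sum>i<m. fps_const (of_rat (c i)) * theta n (Qs i)) N
          = (\<Sum>i<m. of_rat (c i) * of_nat (T (Suc i) N))"
        unfolding fps_sum_nth fps_mult_left_const_nth theta_def Qs_def T_def by simp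
      also have "\<dots> = (\<Sum>i<m. of_int (\<alpha> (Suc i)) * of_nat (T (Suc i) N) / of_nat (card U))"
        unfolding c_def by (simp add: of_rat_divide)
      also have "\<dots> = (\<Sum>e\<in>Suc ` {..<m}. of_int (\<alpha> e) * of_nat (T e N) / of_nat (card U))"
        by (subst sum.reindex) auto
      also have "\<dots> = (\<Sum>e\<in>{1..m}. of_int (\<alpha> e) * of_nat (T e N)) / of_nat (card U)"
        unfolding image_Suc_lessThan by (simp add: sum_divide_distrib)
      also have "\<dots> = fps_nth (theta_m n Q m) N"
        unfolding main[of N, symmetric] using U0 by simp
      finally show "fps_nth (theta_m n Q m) N = fps_nth (\<Sum>i<m. fps_const (of_rat (c i)) * theta n (Qs i)) N" ..
    qed
  qed
qed


end
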